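(* For every $\varepsilon>0$, c-REShare$(\varepsilon)$ is a $2(1+\varepsilon)$-asymptotic competitive algorithm when service requests have unlimited duration, i.e., over request sequences in which all requests have $\tau_r=\infty$, $\limsup_{\phi(\mathrm{OPT})\to\infty}\phi(\text{c-REShare}(\varepsilon))/\phi(\mathrm{OPT})\le 2(1+\varepsilon)$.
   Context: Network: an undirected layered graph whose vertices (nodes) are datacenters. A node is at layer $\ell\ge 0$ if its distance in links from the closest leaf is $\ell$ (leaves are at layer $0$); the network has finitely many nodes. Every node can host arbitrarily many virtual machines (VMs). Each VM $b$ runs exactly one VNF $v$ from a finite set $\mathcal V$, has maximum computing capability $\bar\mu>0$ and allocated capability $\mu_b\le\bar\mu$. Each VNF $v$ has computing complexity $\theta_v\in(0,1]$. Requests: requests $r$ arrive online; each has a set $\mathcal V_r\subseteq\mathcal V$ of VNFs, arrival time $a_r$, duration $\tau_r$, traffic load $\lambda_r\ge\lambda_{\min}$ where $\lambda_{\min}=\inf_r\lambda_r>0$ is known in advance, end-to-end delay target $D_r$, and an arrival leaf. For $v\in\mathcal V_r$, $(r,v)$ is a job. For a VM $b$ running $v$, $\Lambda(b)$ is the total load of jobs on $b$, and each job on $b$ experiences processing latency $1/(\mu_b-\theta_v\Lambda(b))$. Forwarding latency from a leaf to layer $\ell$ is $d_\ell$, with $d_{\ell+1}>d_\ell$. The latency of $r$ is the maximum of $d_\ell$ over layers hosting its jobs plus the sum of processing latencies of its jobs. Fair delay allocation: $M_{r,v}=1/(\bar\mu-\theta_v\lambda_r)$; $\ell^*(r)$ is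 the highest layer $\ell$ with $d_\ell+\sum_{v\in\mathcal V_r}M_{r,v}\le D_r$ (assumed to exist); $D_r^v=\frac{M_{r,v}}{\sum_{u\in\mathcal V_r}M_{r,u}}(D_r-d_{\ell^*(r)})$. A deployment of $r$ is feasible if each job $(r,v)$ is on a VM $b$ running $v$ with $\mu_b\le\bar\mu$ and $1/(\mu_b-\theta_v\Lambda(b))\le D_r^v$, and the latency of $r$ is at most $D_r$. Cost: a VM $b$ at a node of layer $\ell$ hosting at least one job costs $\kappa_f^\ell+\kappa_p^\ell\mu_b$, with $\kappa_f^{\ell+1}<\kappa_f^\ell$, $\kappa_p^{\ell+1}<\kappa_p^\ell$. For an algorithm $A$, $\phi(A)$ is the total cost of the VMs it uses at the end of the request sequence. OPT is a minimum-cost feasible deployment of all requests computed with full knowledge of the sequence. Latency ranges: for $\varepsilon>0$, $L_0=[\frac{1}{\bar\mu-\lambda_{\min}},\frac{1}{\bar\mu-\lambda_{\min}(1+\varepsilon)}]$, $L_j=(\frac{1}{\bar\mu-\lambda_{\min}(1+\varepsilon)^j},\frac{1}{\bar\mu-\lambda_{\min}(1+\varepsilon)^{j+1}}]$ for $j\ge1$ (indices with $\lambda_{\min}(1+\varepsilon)^{j+1}<\bar\mu$); job $(r,v)$ is associated with $L_j$ if $D_r^v\in L_j$ (every fair delay allocation is presumed to lie in some range). Algorithm c-REShare$(\varepsilon)$: on arrival of $r$, compute $\ell^*(r)$ and choose a node $i^*$ at layer $\ell^*(r)$. For each $v\in\mathcal V_r$, with $j$ such that $D_r^v\in L_j$: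 a VM $b$ in $i^*$ running $v$ and hosting jobs associated with $L_j$ is viable if $\frac{1}{\bar\mu-\theta_v(\Lambda(b)+\lambda_r)}\le D_r^v$ and $\frac{1}{\bar\mu-\theta_v(\Lambda(b)+\lambda_r)}\le D_{r'}^v$ for every job $(r',v)$ already on $b$. If viable VMs exist, $(r,v)$ is placed on the viable VM with the largest $\Lambda(b)$, whose capability is set to $\theta_v\Lambda(b)+1/\min_{(r',v)\in b}D_{r'}^v$ (including the new job); otherwise a new VM running $v$ is opened in $i^*$ with capability $\theta_v\lambda_r+1/D_r^v$ and $(r,v)$ is placed on it. Asymptotic competitiveness: an algorithm $A$ is $c$-asymptotic competitive over a class of request sequences if $\limsup \phi(A)/\phi(\mathrm{OPT})\le c$ as $\phi(\mathrm{OPT})\to\infty$ over that class. *)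

theory Defs
  imports "HOL-Analysis.Analysis"
begin

record ('n, 'v) netsys =
  nodes  :: "'n set"
  edge   :: "'n \<Rightarrow> 'n \<Rightarrow> bool"
  leaves :: "'n set"
  VNFs   :: "'v set"
  mubar  :: real                  \<comment> \<open>maximum VM computing capability\<close>
  theta  :: "'v \<Rightarrow> real"          \<comment> \<open>computing complexity of a VNF\<close>
  dlat   :: "nat \<Rightarrow> real"        \<comment> \<open>forwarding latency leaf -> layer\<close>
  kf     :: "nat \<Rightarrow> real"        \<comment> \<open>fixed VM cost per layer\<close>
  kp     :: "nat \<Rightarrow> real"        \<comment> \<open>proportional VM cost per layer\<close>
  lmin   :: real                  \<comment> \<open>lambda_min, known lower bound on loads\<close>

definition gpath :: "('n, 'v, 'z) netsys_scheme \<Rightarrow> 'n list \<Rightarrow> bool" where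
  "gpath S p \<longleftrightarrow> p \<noteq> [] \<and> set p \<subseteq> nodes S \<and>
     (\<forall>t. Suc t < length p \<longrightarrow> edge S (p ! t) (p ! Suc t))"

definition layer :: "('n, 'v, 'z) netsys_scheme \<Rightarrow> 'n \<Rightarrow> nat" where
  "layer S i = (LEAST k. \<exists>p. gpath S p \<and> length p = Suc k \<and> hd p \<in> leaves S \<and> last p = i)"

definition valid_sys :: "('n, 'v, 'z) netsys_scheme \<Rightarrow> bool" where
  "valid_sys S \<longleftrightarrow>
     finite (nodes S) \<and> leaves S \<subseteq> nodes S \<and> leaves S \<noteq> {} \<and>
     (\<forall>x y. edge S x y \<longrightarrow> x \<in> nodes S \<and> y \<in> nodes S) \<and>
     (\<forall>x y. edge S x y \<longleftrightarrow> edge S y x) \<and>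
     (\<forall>i\<in>nodes S. \<exists>p. gpath S p \<and> hd p \<in> leaves S \<and> last p = i) \<and>
     finite (VNFs S) \<and> mubar S > 0 \<and>
     (\<forall>v\<in>VNFs S. 0 < theta S v \<and> theta S v \<le> 1) \<and>
     (\<forall>l. dlat S l < dlat S (Suc l)) \<and>
     (\<forall>l. kf S (Suc l) < kf S l) \<and> (\<forall>l. kp S (Suc l) < kp S l) \<and>
     (\<forall>i\<in>nodes S. 0 < kf S (layer S i) \<and> 0 < kp S (layer S i)) \<and>
     lmin S > 0"

record ('n, 'v) req =
  rvnfs :: "'v set"
  arr   :: real
  dur   :: ereal
  load  :: real
  dtgt  :: real         \<comment> \<open>end-to-end delay target D_r\<close>
  aleaf :: 'n

definition Mrv :: "('n, 'v, 'z) netsys_scheme \<Rightarrow> ('n, 'v) req \<Rightarrow> 'v \<Rightarrow> real" where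
  "Mrv S r v = 1 / (mubar S - theta S v * load r)"

definition sumM :: "('n, 'v, 'z) netsys_scheme \<Rightarrow> ('n, 'v) req \<Rightarrow> real" where
  "sumM S r = (\<Sum>u\<in>rvnfs r. Mrv S r u)"

definition lstar :: "('n, 'v, 'z) netsys_scheme \<Rightarrow> ('n, 'v) req \<Rightarrow> nat" where
  "lstar S r = (GREATEST l. l \<in> layer S ` nodes S \<and> dlat S l + sumM S r \<le> dtgt r)"

definition Dv :: "('n, 'v, 'z) netsys_scheme \<Rightarrow> ('n, 'v) req \<Rightarrow> 'v \<Rightarrow> real" where
  "Dv S r v = Mrv S r v / sumM S r * (dtgt r - dlat S (lstar S r))"

definition inL :: "('n, 'v, 'z) netsys_scheme \<Rightarrow> real \<Rightarrow> nat \<Rightarrow> real \<Rightarrow> bool" where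
  "inL S eps j x \<longleftrightarrow> lmin S * (1 + eps) ^ (j + 1) < mubar S \<and>
     (if j = 0
      then 1 / (mubar S - lmin S) \<le> x \<and> x \<le> 1 / (mubar S - lmin S * (1 + eps))
      else 1 / (mubar S - lmin S * (1 + eps) ^ j) < x \<and>
           x \<le> 1 / (mubar S - lmin S * (1 + eps) ^ (j + 1)))"

definition valid_req :: "('n, 'v, 'z) netsys_scheme \<Rightarrow> real \<Rightarrow> ('n, 'v) req \<Rightarrow> bool" where
  "valid_req S eps r \<longleftrightarrow>
     rvnfs r \<subseteq> VNFs S \<and> lmin S \<le> load r \<and> aleaf r \<in> leaves S \<and>
     (\<forall>v\<in>rvnfs r. theta S v * load r < mubar S) \<and>
     (\<exists>l\<in>layer S ` nodes S. dlat S l + sumM S r \<le> dtgt r) \<and>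
     (\<forall>v\<in>rvnfs r. \<exists>j. inL S eps j (Dv S r v))"

text \<open>A deployment: a list of VMs (node, VNF, capability) and an assignment of
  each job (k, v) (k = index of the request in the sequence) to a VM index.\<close>
type_synonym ('n, 'v) vm = "'n \<times> 'v \<times> real"

definition jobs_on :: "('n, 'v) req list \<Rightarrow> (nat \<Rightarrow> 'v \<Rightarrow> nat) \<Rightarrow> nat \<Rightarrow> (nat \<times> 'v) set" where
  "jobs_on rs asg p = {(k, v). k < length rs \<and> v \<in> rvnfs (rs ! k) \<and> asg k v = p}"

definition Lam_off :: "('n, 'v) req list \<Rightarrow> (nat \<Rightarrow> 'v \<Rightarrow> nat) \<Rightarrow> nat \<Rightarrow> real" where
  "Lam_off rs asg p = (\<Sum>(k, v)\<in>jobs_on rs asg p. load (rs ! k))"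

definition proc_off :: "('n, 'v, 'z) netsys_scheme \<Rightarrow> ('n, 'v) req list \<Rightarrow> ('n, 'v) vm list
     \<Rightarrow> (nat \<Rightarrow> 'v \<Rightarrow> nat) \<Rightarrow> nat \<Rightarrow> real" where
  "proc_off S rs vms asg p =
     1 / (snd (snd (vms ! p)) - theta S (fst (snd (vms ! p))) * Lam_off rs asg p)"

definition feasible_dep :: "('n, 'v, 'z) netsys_scheme \<Rightarrow> ('n, 'v) req list \<Rightarrow> ('n, 'v) vm list
     \<Rightarrow> (nat \<Rightarrow> 'v \<Rightarrow> nat) \<Rightarrow> bool" where
  "feasible_dep S rs vms asg \<longleftrightarrow>
     (\<forall>p<length vms. fst (vms ! p) \<in> nodes S \<and> fst (snd (vms ! p)) \<in> VNFs S \<and>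
                      snd (snd (vms ! p)) \<le> mubar S) \<and>
     (\<forall>k<length rs. \<forall>v\<in>rvnfs (rs ! k).
        asg k v < length vms \<and> fst (snd (vms ! asg k v)) = v \<and>
        snd (snd (vms ! asg k v)) - theta S v * Lam_off rs asg (asg k v) > 0 \<and>
        proc_off S rs vms asg (asg k v) \<le> Dv S (rs ! k) v) \<and>
     (\<forall>k<length rs. \<forall>u\<in>rvnfs (rs ! k).
        dlat S (layer S (fst (vms ! asg k u))) +
          (\<Sum>w\<in>rvnfs (rs ! k). proc_off S rs vms asg (asg k w)) \<le> dtgt (rs ! k))"

definition dep_cost :: "('n, 'v, 'z) netsys_scheme \<Rightarrow> ('n, 'v) req list \<Rightarrow> ('n, 'v) vm list
     \<Rightarrow> (nat \<Rightarrow> 'v \<Rightarrow> nat) \<Rightarrow> real" where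
  "dep_cost S rs vms asg =
     (\<Sum>p\<in>{p. p < length vms \<and> jobs_on rs asg p \<noteq> {}}.
        kf S (layer S (fst (vms ! p))) + kp S (layer S (fst (vms ! p))) * snd (snd (vms ! p)))"

definition opt_cost :: "('n, 'v, 'z) netsys_scheme \<Rightarrow> ('n, 'v) req list \<Rightarrow> real" where
  "opt_cost S rs = Inf {dep_cost S rs vms asg | vms asg. feasible_dep S rs vms asg}"

text \<open>An algorithm VM: node, VNF, latency-range index j, jobs (request indices).\<close>
datatype ('n, 'v) avm = AVM (vnode: 'n) (vvnf: 'v) (vrng: nat) (vjobs: "nat list")

definition Lam :: "('n, 'v) req list \<Rightarrow> ('n, 'v) avm \<Rightarrow> real" where
  "Lam rs b = sum_list (map (\<lambda>k. load (rs ! k)) (vjobs b))"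

definition viable :: "('n, 'v, 'z) netsys_scheme \<Rightarrow> ('n, 'v) req list \<Rightarrow> nat \<Rightarrow> 'v \<Rightarrow> 'n
     \<Rightarrow> nat \<Rightarrow> ('n, 'v) avm \<Rightarrow> bool" where
  "viable S rs k v i j b \<longleftrightarrow>
     vnode b = i \<and> vvnf b = v \<and> vrng b = j \<and>
     (let x = mubar S - theta S v * (Lam rs b + load (rs ! k)) in
        x > 0 \<and> 1 / x \<le> Dv S (rs ! k) v \<and>
        (\<forall>k'\<in>set (vjobs b). 1 / x \<le> Dv S (rs ! k') v))"

text \<open>Placement of job (k, v) in node i (ties among viable VMs broken arbitrarily).\<close>
inductive place :: "('n, 'v, 'z) netsys_scheme \<Rightarrow> real \<Rightarrow> ('n, 'v) req list \<Rightarrow> nat \<Rightarrow> 'n \<Rightarrow> 'v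
     \<Rightarrow> ('n, 'v) avm list \<Rightarrow> ('n, 'v) avm list \<Rightarrow> bool"
  for S eps rs k i v where
  place_old: "\<lbrakk> inL S eps j (Dv S (rs ! k) v); p < length st; viable S rs k v i j (st ! p);
      \<forall>q<length st. viable S rs k v i j (st ! q) \<longrightarrow> Lam rs (st ! q) \<le> Lam rs (st ! p) \<rbrakk>
    \<Longrightarrow> place S eps rs k i v st (st[p := AVM i v j (vjobs (st ! p) @ [k])])"
| place_new: "\<lbrakk> inL S eps j (Dv S (rs ! k) v);
      \<not> (\<exists>q<length st. viable S rs k v i j (st ! q)) \<rbrakk>
    \<Longrightarrow> place S eps rs k i v st (st @ [AVM i v j [k]])"

inductive place_list :: "('n, 'v, 'z) netsys_scheme \<Rightarrow> real \<Rightarrow> ('n, 'v) req list \<Rightarrow> nat \<Rightarrow> 'n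
     \<Rightarrow> 'v list \<Rightarrow> ('n, 'v) avm list \<Rightarrow> ('n, 'v) avm list \<Rightarrow> bool"
  for S eps rs k i where
  "place_list S eps rs k i [] st st"
| "\<lbrakk> place S eps rs k i v st st1; place_list S eps rs k i vs st1 st2 \<rbrakk>
    \<Longrightarrow> place_list S eps rs k i (v # vs) st st2"

text \<open>State after processing the first n requests (any node choice at layer l*(r),
  any processing order of the VNFs of a request, any tie breaking).\<close>
inductive alg_run :: "('n, 'v, 'z) netsys_scheme \<Rightarrow> real \<Rightarrow> ('n, 'v) req list \<Rightarrow> nat
     \<Rightarrow> ('n, 'v) avm list \<Rightarrow> bool"
  for S eps rs where
  "alg_run S eps rs 0 []"
| "\<lbrakk> alg_run S eps rs n st; n < length rs; i \<in> nodes S; layer S i = lstar S (rs ! n);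
     distinct vs; set vs = rvnfs (rs ! n); place_list S eps rs n i vs st st' \<rbrakk>
    \<Longrightarrow> alg_run S eps rs (Suc n) st'"

definition acap :: "('n, 'v, 'z) netsys_scheme \<Rightarrow> ('n, 'v) req list \<Rightarrow> ('n, 'v) avm \<Rightarrow> real" where
  "acap S rs b = theta S (vvnf b) * Lam rs b +
     1 / Min ((\<lambda>k. Dv S (rs ! k) (vvnf b)) ` set (vjobs b))"

definition alg_cost :: "('n, 'v, 'z) netsys_scheme \<Rightarrow> ('n, 'v) req list \<Rightarrow> ('n, 'v) avm list \<Rightarrow> real" where
  "alg_cost S rs st = sum_list (map (\<lambda>b.
     if vjobs b = [] then 0 else kf S (layer S (vnode b)) + kp S (layer S (vnode b)) * acap S rs b) st)"

text \<open>limsup of phi(A)/phi(OPT) as phi(OPT) -> infinity over the class is at most c.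
  The algorithm may be nondeterministic: A sigma a means some run of A on sigma has cost a.\<close>
definition asymp_competitive :: "real \<Rightarrow> ('s \<Rightarrow> bool) \<Rightarrow> ('s \<Rightarrow> real \<Rightarrow> bool) \<Rightarrow> ('s \<Rightarrow> real) \<Rightarrow> bool" where
  "asymp_competitive c cls A OPT \<longleftrightarrow>
     (\<forall>\<delta>>0. \<exists>X. \<forall>\<sigma> a. cls \<sigma> \<longrightarrow> A \<sigma> a \<longrightarrow> X \<le> OPT \<sigma> \<longrightarrow> a \<le> (c + \<delta>) * OPT \<sigma>)"

definition unlimited_seq :: "('n, 'v, 'z) netsys_scheme \<Rightarrow> real \<Rightarrow> ('n, 'v) req list \<Rightarrow> bool" where
  "unlimited_seq S eps rs \<longleftrightarrow>
     sorted (map arr rs) \<and> (\<forall>r\<in>set rs. valid_req S eps r \<and> dur r = \<infinity>)"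

end

theory Submission
  imports Defs
begin


definition cj :: "('n, 'v, 'z) netsys_scheme \<Rightarrow> real \<Rightarrow> nat \<Rightarrow> real" where
  "cj S eps j = lmin S * (1 + eps) ^ j"

lemma inL_facts:
  assumes "valid_sys S" "eps > 0" "inL S eps j x"
  shows "0 < cj S eps j" "cj S eps j * (1 + eps) < mubar S" "cj S eps j < mubar S"
    "1 / (mubar S - cj S eps j) \<le> x" "x \<le> 1 / (mubar S - cj S eps j * (1 + eps))"
    "0 < x"
proof -
  have lm: "lmin S > 0" using assms(1) by (simp add: valid_sys_def)
  show c0: "0 < cj S eps j" using lm assms(2) by (simp add: cj_def)
  have e: "(1 + eps) ^ (j + 1) = (1 + eps) ^ j * (1 + eps)" by simp
  show c1: "cj S eps j * (1 + eps) < mubar S"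
    using assms(3) unfolding inL_def cj_def e by (simp add: mult.assoc)
  have "cj S eps j < cj S eps j * (1 + eps)" using c0 assms(2) by simp
  thus c2: "cj S eps j < mubar S" using c1 by linarith
  show "1 / (mubar S - cj S eps j) \<le> x"
    using assms(3) unfolding inL_def cj_def e by (auto split: if_splits)
  moreover have "0 < 1 / (mubar S - cj S eps j)" using c2 by simp
  ultimately show "0 < x" by linarith
  show "x \<le> 1 / (mubar S - cj S eps j * (1 + eps))"
    using assms(3) unfolding inL_def cj_def e by (auto simp: mult.assoc split: if_splits)
qed

lemma inL_unique:
  assumes "valid_sys S" "eps > 0" "inL S eps j x" "inL S eps j' x"
  shows "j = j'"
proof (rule ccontr)
  assume ne: "j \<noteq> j'"
  have main: "False" if a: "inL S eps a x" "inL S eps b x" "a < b" for a b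
  proof -
    have "x \<le> 1 / (mubar S - lmin S * (1 + eps) ^ (a + 1))"
      using inL_facts(5)[OF assms(1,2) a(1)] by (simp add: cj_def mult_ac)
    moreover have "1 / (mubar S - lmin S * (1 + eps) ^ b) < x"
      using a(2) a(3) unfolding inL_def by auto
    moreover have "lmin S * (1 + eps) ^ (a + 1) \<le> lmin S * (1 + eps) ^ b"
      using a(3) assms(1,2) by (intro mult_left_mono power_increasing) (auto simp: valid_sys_def)
    moreover have "lmin S * (1 + eps) ^ b < mubar S"
      using inL_facts(3)[OF assms(1,2) a(2)] by (simp add: cj_def)
    ultimately have "1 / (mubar S - lmin S * (1 + eps) ^ b) < 1 / (mubar S - lmin S * (1 + eps) ^ b)"
      by (smt (verit, ccfv_SIG) frac_le)
    thus False by simp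
  qed
  show False using ne main assms(3,4) by (metis linorder_neqE_nat)
qed

definition jx :: "('n, 'v, 'z) netsys_scheme \<Rightarrow> real \<Rightarrow> real \<Rightarrow> nat" where
  "jx S eps x = (THE j. inL S eps j x)"

lemma jx_eq:
  assumes "valid_sys S" "eps > 0" "inL S eps j x"
  shows "jx S eps x = j"
  unfolding jx_def using assms inL_unique by blast

lemma jx_inL:
  assumes "valid_sys S" "eps > 0" "valid_req S eps r" "v \<in> rvnfs r"
  shows "inL S eps (jx S eps (Dv S r v)) (Dv S r v)"
proof -
  obtain j where "inL S eps j (Dv S r v)" using assms(3,4) unfolding valid_req_def by blast
  thus ?thesis using jx_eq[OF assms(1,2)] by simp
qed

lemma lstar_props:
  assumes "valid_sys S" "valid_req S eps r"
  shows "lstar S r \<in> layer S ` nodes S" "dlat S (lstar S r) + sumM S r \<le> dtgt r"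
    "\<And>l. l \<in> layer S ` nodes S \<Longrightarrow> dlat S l + sumM S r \<le> dtgt r \<Longrightarrow> l \<le> lstar S r"
proof -
  have fin: "finite (layer S ` nodes S)" using assms(1) by (simp add: valid_sys_def)
  obtain l0 where l0: "l0 \<in> layer S ` nodes S" "dlat S l0 + sumM S r \<le> dtgt r"
    using assms(2) unfolding valid_req_def by blast
  have bd: "\<And>y. y \<in> layer S ` nodes S \<and> dlat S y + sumM S r \<le> dtgt r \<Longrightarrow> y \<le> Max (layer S ` nodes S)"
    using fin by auto
  have "lstar S r \<in> layer S ` nodes S \<and> dlat S (lstar S r) + sumM S r \<le> dtgt r"
    unfolding lstar_def by (rule GreatestI_nat[of _ l0, OF _ bd]) (use l0 in auto)
  thus "lstar S r \<in> layer S ` nodes S" "dlat S (lstar S r) + sumM S r \<le> dtgt r" by auto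
  show "l \<le> lstar S r" if "l \<in> layer S ` nodes S" "dlat S l + sumM S r \<le> dtgt r" for l
    unfolding lstar_def by (rule Greatest_le_nat[of _ l, OF _ bd]) (use that in auto)
qed

lemma kf_anti: "valid_sys S \<Longrightarrow> l \<le> l' \<Longrightarrow> kf S l' \<le> kf S l"
  by (rule lift_Suc_antimono_le[of "kf S"]) (auto simp: valid_sys_def less_imp_le)

lemma kp_anti: "valid_sys S \<Longrightarrow> l \<le> l' \<Longrightarrow> kp S l' \<le> kp S l"
  by (rule lift_Suc_antimono_le[of "kp S"]) (auto simp: valid_sys_def less_imp_le)

lemma kfp_pos: "valid_sys S \<Longrightarrow> l \<in> layer S ` nodes S \<Longrightarrow> 0 < kf S l \<and> 0 < kp S l"
  by (auto simp: valid_sys_def)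



lemma valid_nth: "unlimited_seq S eps rs \<Longrightarrow> k < length rs \<Longrightarrow> valid_req S eps (rs ! k)"
  unfolding unlimited_seq_def by auto

lemma lmin_pos: "valid_sys S \<Longrightarrow> 0 < lmin S"
  by (simp add: valid_sys_def)

lemma load_pos: "valid_sys S \<Longrightarrow> unlimited_seq S eps rs \<Longrightarrow> k < length rs \<Longrightarrow> 0 < load (rs ! k)"
proof -
  assume a: "valid_sys S" "unlimited_seq S eps rs" "k < length rs"
  have "lmin S \<le> load (rs ! k)" using valid_nth[OF a(2,3)] by (simp add: valid_req_def)
  thus ?thesis using lmin_pos[OF a(1)] by linarith
qed

lemma rv_sub: "unlimited_seq S eps rs \<Longrightarrow> k < length rs \<Longrightarrow> rvnfs (rs ! k) \<subseteq> VNFs S"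
  using valid_nth[of S eps rs k] by (simp add: valid_req_def)

lemma theta_pos: "valid_sys S \<Longrightarrow> v \<in> VNFs S \<Longrightarrow> 0 < theta S v"
  by (simp add: valid_sys_def)

lemma jobs_on_sub: "jobs_on rs asg p \<subseteq> {(k, v). k < length rs \<and> v \<in> rvnfs (rs ! k)}"
  unfolding jobs_on_def by auto

lemma J_fin:
  assumes "valid_sys S" "unlimited_seq S eps rs"
  shows "finite {(k, v). k < length rs \<and> v \<in> rvnfs (rs ! k)}"
proof (rule finite_subset)
  show "{(k, v). k < length rs \<and> v \<in> rvnfs (rs ! k)} \<subseteq> {..<length rs} \<times> VNFs S"
    using rv_sub[OF assms(2)] by auto
  show "finite ({..<length rs} \<times> VNFs S)" using assms(1) by (simp add: valid_sys_def)
qed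

lemma fd1:
  assumes "feasible_dep S rs vms asg" "p < length vms"
  shows "fst (vms ! p) \<in> nodes S" "fst (snd (vms ! p)) \<in> VNFs S" "snd (snd (vms ! p)) \<le> mubar S"
  using assms by (simp_all add: feasible_dep_def)

lemma fd2:
  assumes "feasible_dep S rs vms asg" "k < length rs" "v \<in> rvnfs (rs ! k)"
  shows "asg k v < length vms" "fst (snd (vms ! asg k v)) = v"
    "snd (snd (vms ! asg k v)) - theta S v * Lam_off rs asg (asg k v) > 0"
    "proc_off S rs vms asg (asg k v) \<le> Dv S (rs ! k) v"
proof -
  have "\<forall>k<length rs. \<forall>v\<in>rvnfs (rs ! k).
        asg k v < length vms \<and> fst (snd (vms ! asg k v)) = v \<and>
        snd (snd (vms ! asg k v)) - theta S v * Lam_off rs asg (asg k v) > 0 \<and>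
        proc_off S rs vms asg (asg k v) \<le> Dv S (rs ! k) v"
    using assms(1) unfolding feasible_dep_def by (elim conjE)
  thus "asg k v < length vms" "fst (snd (vms ! asg k v)) = v"
    "snd (snd (vms ! asg k v)) - theta S v * Lam_off rs asg (asg k v) > 0"
    "proc_off S rs vms asg (asg k v) \<le> Dv S (rs ! k) v" using assms(2,3) by blast+
qed

lemma fd3:
  assumes "feasible_dep S rs vms asg" "k < length rs" "v \<in> rvnfs (rs ! k)"
  shows "dlat S (layer S (fst (vms ! asg k v))) +
          (\<Sum>w\<in>rvnfs (rs ! k). proc_off S rs vms asg (asg k w)) \<le> dtgt (rs ! k)"
proof -
  have "\<forall>k<length rs. \<forall>u\<in>rvnfs (rs ! k).
        dlat S (layer S (fst (vms ! asg k u))) +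
          (\<Sum>w\<in>rvnfs (rs ! k). proc_off S rs vms asg (asg k w)) \<le> dtgt (rs ! k)"
    using assms(1) unfolding feasible_dep_def by (elim conjE)
  thus ?thesis using assms(2,3) by blast
qed

lemma proc_ge_M:
  assumes vs: "valid_sys S" and us: "unlimited_seq S eps rs" and fd: "feasible_dep S rs vms asg"
    and k: "k < length rs" and w: "w \<in> rvnfs (rs ! k)"
  shows "Mrv S (rs ! k) w \<le> proc_off S rs vms asg (asg k w)"
proof -
  let ?q = "asg k w"
  have q: "?q < length vms" "fst (snd (vms ! ?q)) = w"
    "snd (snd (vms ! ?q)) - theta S w * Lam_off rs asg ?q > 0"
    using fd2[OF fd k w] by auto
  have mu: "snd (snd (vms ! ?q)) \<le> mubar S" using fd1[OF fd q(1)] by auto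
  have th: "0 < theta S w" using theta_pos[OF vs] rv_sub[OF us k] w by auto
  have fin: "finite (jobs_on rs asg ?q)"
    by (rule finite_subset[OF jobs_on_sub J_fin[OF vs us]])
  have mem: "(k, w) \<in> jobs_on rs asg ?q" using k w unfolding jobs_on_def by auto
  have nn: "0 \<le> (case x of (k, v) \<Rightarrow> load (rs ! k))" if "x \<in> jobs_on rs asg ?q" for x
  proof -
    obtain a b where x: "x = (a, b)" by (cases x)
    have "a < length rs" using that x unfolding jobs_on_def by simp
    thus ?thesis using load_pos[OF vs us] x by (simp add: less_imp_le)
  qed
  have "(case (k, w) of (k, v) \<Rightarrow> load (rs ! k)) \<le> Lam_off rs asg ?q"
    unfolding Lam_off_def by (rule member_le_sum[OF mem nn fin]) simp
  hence le: "load (rs ! k) \<le> Lam_off rs asg ?q" by simp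
  have "theta S w * load (rs ! k) \<le> theta S w * Lam_off rs asg ?q"
    using mult_left_mono[OF le] th by simp
  hence "snd (snd (vms ! ?q)) - theta S w * Lam_off rs asg ?q \<le> mubar S - theta S w * load (rs ! k)"
    using mu by linarith
  hence "1 / (mubar S - theta S w * load (rs ! k)) \<le> 1 / (snd (snd (vms ! ?q)) - theta S w * Lam_off rs asg ?q)"
    using q(3) by (intro divide_left_mono) auto
  thus ?thesis unfolding Mrv_def proc_off_def using q(2) by simp
qed

lemma layer_le_lstar:
  assumes vs: "valid_sys S" and us: "unlimited_seq S eps rs" and fd: "feasible_dep S rs vms asg"
    and k: "k < length rs" and v: "v \<in> rvnfs (rs ! k)"
  shows "layer S (fst (vms ! asg k v)) \<le> lstar S (rs ! k)"
proof (rule lstar_props(3)[OF vs valid_nth[OF us k]])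
  have "asg k v < length vms" using fd2[OF fd k v] by auto
  hence "fst (vms ! asg k v) \<in> nodes S" using fd1[OF fd] by auto
  thus "layer S (fst (vms ! asg k v)) \<in> layer S ` nodes S" by auto
  have "sumM S (rs ! k) \<le> (\<Sum>w\<in>rvnfs (rs ! k). proc_off S rs vms asg (asg k w))"
    unfolding sumM_def by (rule sum_mono) (rule proc_ge_M[OF vs us fd k])
  moreover have "dlat S (layer S (fst (vms ! asg k v))) +
          (\<Sum>w\<in>rvnfs (rs ! k). proc_off S rs vms asg (asg k w)) \<le> dtgt (rs ! k)"
    using fd3[OF fd k v] .
  ultimately show "dlat S (layer S (fst (vms ! asg k v))) + sumM S (rs ! k) \<le> dtgt (rs ! k)" by linarith
qed



definition phi :: "('n, 'v, 'z) netsys_scheme \<Rightarrow> real \<Rightarrow> ('n, 'v) req \<Rightarrow> 'v \<Rightarrow> real" where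
  "phi S eps r v = theta S v * load r / (cj S eps (jx S eps (Dv S r v)) * (1 + eps)) *
     (kf S (lstar S r) + kp S (lstar S r) * (mubar S - cj S eps (jx S eps (Dv S r v)) * (1 + eps)))
     + kp S (lstar S r) * (theta S v * load r)"

lemma inv_le_imp: "0 < x \<Longrightarrow> 0 < g \<Longrightarrow> 1 / x \<le> 1 / g \<Longrightarrow> g \<le> (x::real)"
  by (smt (verit) divide_strict_left_mono mult_pos_pos zero_less_one)

lemma vm_bound:
  assumes vs: "valid_sys S" and ep: "eps > 0" and us: "unlimited_seq S eps rs"
    and fd: "feasible_dep S rs vms asg"
    and p: "p < length vms" and ne: "jobs_on rs asg p \<noteq> {}"
  shows "(\<Sum>x\<in>jobs_on rs asg p. phi S eps (rs ! fst x) (snd x))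
     \<le> kf S (layer S (fst (vms ! p))) + kp S (layer S (fst (vms ! p))) * snd (snd (vms ! p))"
proof -
  obtain i v0 mu where vp: "vms ! p = (i, v0, mu)" by (cases "vms ! p") auto
  define Jp where "Jp = jobs_on rs asg p"
  define l where "l = layer S i"
  define th where "th = theta S v0"
  define Lm where "Lm = Lam_off rs asg p"
  define x where "x = mu - th * Lm"
  define B where "B = kf S l + kp S l * x"
  have fin: "finite Jp" unfolding Jp_def by (rule finite_subset[OF jobs_on_sub J_fin[OF vs us]])
  have mem: "fst y < length rs \<and> snd y \<in> rvnfs (rs ! fst y) \<and> asg (fst y) (snd y) = p" if "y \<in> Jp" for y
    using that unfolding Jp_def jobs_on_def by auto
  have i: "i \<in> nodes S" "v0 \<in> VNFs S" "mu \<le> mubar S" using fd1[OF fd p] vp by auto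
  have thp: "0 < th" unfolding th_def using theta_pos[OF vs i(2)] .
  have lpos: "0 < kf S l" "0 < kp S l" unfolding l_def using kfp_pos[OF vs] i(1) by auto
  have vv: "snd y = v0" if "y \<in> Jp" for y
    using fd2(2)[OF fd, of "fst y" "snd y"] mem[OF that] vp by auto
  have Lm_eq: "Lm = (\<Sum>y\<in>Jp. load (rs ! fst y))"
    unfolding Lm_def Lam_off_def Jp_def by (simp add: case_prod_unfold)
  have Lmpos: "0 < Lm" unfolding Lm_eq
    using ne fin load_pos[OF vs us] mem unfolding Jp_def[symmetric] by (intro sum_pos) auto
  have xpos: "0 < x" and px: "1 / x \<le> Dv S (rs ! fst y) (snd y)" if "y \<in> Jp" for y
  proof -
    have "snd (snd (vms ! asg (fst y) (snd y))) - theta S (snd y) * Lam_off rs asg (asg (fst y) (snd y)) > 0"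
      "proc_off S rs vms asg (asg (fst y) (snd y)) \<le> Dv S (rs ! fst y) (snd y)"
      using fd2(3,4)[OF fd, of "fst y" "snd y"] mem[OF that] by auto
    thus "0 < x" "1 / x \<le> Dv S (rs ! fst y) (snd y)"
      using mem[OF that] vv[OF that] vp unfolding x_def th_def Lm_def proc_off_def by auto
  qed
  obtain y0 where y0: "y0 \<in> Jp" using ne unfolding Jp_def by blast
  have x0: "0 < x" using xpos[OF y0] .
  have "0 < kp S l * x" using lpos x0 by simp
  hence B0: "0 \<le> B" unfolding B_def using lpos by linarith
  have job: "phi S eps (rs ! fst y) (snd y) \<le> load (rs ! fst y) / Lm * B + kp S l * (th * load (rs ! fst y))"
    if y: "y \<in> Jp" for y
  proof -
    define k where "k = fst y"
    define jj where "jj = jx S eps (Dv S (rs ! k) v0)"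
    define c where "c = cj S eps jj"
    define L where "L = lstar S (rs ! k)"
    define lam where "lam = load (rs ! k)"
    have k: "k < length rs" "v0 \<in> rvnfs (rs ! k)" using mem[OF y] vv[OF y] unfolding k_def by auto
    have vr: "valid_req S eps (rs ! k)" using valid_nth[OF us k(1)] .
    have iL: "inL S eps jj (Dv S (rs ! k) v0)" unfolding jj_def using jx_inL[OF vs ep vr k(2)] .
    note f = inL_facts[OF vs ep iL, folded c_def]
    have lampos: "0 < lam" unfolding lam_def using load_pos[OF vs us k(1)] .
    have gpos: "0 < mubar S - c * (1 + eps)" using f(2) by simp
    have "1 / x \<le> 1 / (mubar S - c * (1 + eps))"
      using px[OF y] f(5) vv[OF y] unfolding k_def by simp
    hence gx: "mubar S - c * (1 + eps) \<le> x" using inv_le_imp[OF xpos[OF y] gpos] by simp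
    have thL: "th * Lm \<le> c * (1 + eps)" using gx i(3) unfolding x_def by linarith
    have lL: "l \<le> L" unfolding l_def L_def
    proof -
      have "asg k v0 = p" using mem[OF y] vv[OF y] unfolding k_def by auto
      thus "layer S i \<le> lstar S (rs ! k)" using layer_le_lstar[OF vs us fd k] vp by simp
    qed
    have Lin: "L \<in> layer S ` nodes S" unfolding L_def using lstar_props(1)[OF vs vr] .
    have Lpos: "0 < kf S L" "0 < kp S L" using kfp_pos[OF vs Lin] by auto
    have A: "kf S L + kp S L * (mubar S - c * (1 + eps)) \<le> B"
    proof -
      have "kf S L \<le> kf S l" using kf_anti[OF vs lL] .
      moreover have "kp S L * (mubar S - c * (1 + eps)) \<le> kp S l * (mubar S - c * (1 + eps))"
        using kp_anti[OF vs lL] gpos by (simp add: mult_right_mono)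
      moreover have "kp S l * (mubar S - c * (1 + eps)) \<le> kp S l * x"
        using gx lpos by (simp add: mult_left_mono)
      ultimately show ?thesis unfolding B_def by linarith
    qed
    have w0: "0 \<le> th * lam / (c * (1 + eps))" using thp lampos f(1) ep by simp
    have w1: "th * lam / (c * (1 + eps)) \<le> th * lam / (th * Lm)"
      using thp lampos Lmpos thL by (intro frac_le) auto
    have w2: "th * lam / (th * Lm) = lam / Lm" using thp by simp
    have "th * lam / (c * (1 + eps)) * (kf S L + kp S L * (mubar S - c * (1 + eps)))
          \<le> th * lam / (c * (1 + eps)) * B" using A w0 by (rule mult_left_mono)
    also have "\<dots> \<le> lam / Lm * B" by (rule mult_right_mono[OF _ B0]) (use w1 w2 in simp)
    finally have t1: "th * lam / (c * (1 + eps)) * (kf S L + kp S L * (mubar S - c * (1 + eps))) \<le> lam / Lm * B" .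
    have t2: "kp S L * (th * lam) \<le> kp S l * (th * lam)"
      using kp_anti[OF vs lL] thp lampos by (simp add: mult_right_mono)
    have "phi S eps (rs ! k) v0 = th * lam / (c * (1 + eps)) * (kf S L + kp S L * (mubar S - c * (1 + eps)))
        + kp S L * (th * lam)"
      unfolding phi_def th_def lam_def c_def jj_def L_def ..
    thus ?thesis using t1 t2 vv[OF y] unfolding k_def lam_def by simp
  qed
  have "(\<Sum>y\<in>Jp. phi S eps (rs ! fst y) (snd y))
      \<le> (\<Sum>y\<in>Jp. load (rs ! fst y) / Lm * B + kp S l * (th * load (rs ! fst y)))"
    by (rule sum_mono) (rule job)
  also have "\<dots> = B / Lm * (\<Sum>y\<in>Jp. load (rs ! fst y)) + kp S l * th * (\<Sum>y\<in>Jp. load (rs ! fst y))"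
    by (simp add: sum.distrib sum_distrib_left mult_ac)
  also have "\<dots> = B + kp S l * th * Lm" unfolding Lm_eq[symmetric] using Lmpos by simp
  also have "\<dots> = kf S l + kp S l * mu" unfolding B_def x_def by (simp add: algebra_simps)
  finally show ?thesis unfolding Jp_def l_def using vp by simp
qed

lemma opt_lower:
  assumes vs: "valid_sys S" and ep: "eps > 0" and us: "unlimited_seq S eps rs"
    and fd: "feasible_dep S rs vms asg"
  shows "(\<Sum>y\<in>{(k, v). k < length rs \<and> v \<in> rvnfs (rs ! k)}. phi S eps (rs ! fst y) (snd y))
     \<le> dep_cost S rs vms asg"
proof -
  define J where "J = {(k, v). k < length rs \<and> v \<in> rvnfs (rs ! k)}"
  define P where "P = {p. p < length vms \<and> jobs_on rs asg p \<noteq> {}}"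
  define g where "g = (\<lambda>y. asg (fst y) (snd y))"
  define h where "h = (\<lambda>y. phi S eps (rs ! fst y) (snd y))"
  have finJ: "finite J" unfolding J_def using J_fin[OF vs us] .
  have finP: "finite P" unfolding P_def by (rule finite_subset[of _ "{..<length vms}"]) auto
  have gS: "g ` J \<subseteq> P"
  proof
    fix z assume "z \<in> g ` J"
    then obtain k v where kv: "k < length rs" "v \<in> rvnfs (rs ! k)" "z = asg k v"
      unfolding J_def g_def by auto
    have "(k, v) \<in> jobs_on rs asg z" using kv unfolding jobs_on_def by auto
    thus "z \<in> P" using fd2(1)[OF fd kv(1,2)] kv(3) unfolding P_def by auto
  qed
  have eq: "{x \<in> J. g x = p} = jobs_on rs asg p" for p
    unfolding J_def g_def jobs_on_def by auto
  have "(\<Sum>y\<in>J. h y) = (\<Sum>p\<in>P. \<Sum>y\<in>{x \<in> J. g x = p}. h y)"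
    using sum.group[OF finJ finP gS, of h] by simp
  also have "\<dots> = (\<Sum>p\<in>P. \<Sum>y\<in>jobs_on rs asg p. h y)" unfolding eq ..
  also have "\<dots> \<le> (\<Sum>p\<in>P. kf S (layer S (fst (vms ! p))) + kp S (layer S (fst (vms ! p))) * snd (snd (vms ! p)))"
    by (rule sum_mono) (unfold h_def P_def, rule vm_bound[OF vs ep us fd], auto)
  finally show ?thesis unfolding dep_cost_def J_def P_def h_def .
qed



definition jobsJ :: "('n, 'v) req list \<Rightarrow> nat \<Rightarrow> 'v set \<Rightarrow> (nat \<times> 'v) set" where
  "jobsJ rs n V = {(k, v). k < n \<and> v \<in> rvnfs (rs ! k)} \<union> Pair n ` V"

definition bsum :: "(nat \<Rightarrow> 'v \<Rightarrow> real) \<Rightarrow> ('n, 'v) avm list \<Rightarrow> real" where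
  "bsum f st = sum_list (map (\<lambda>b. sum_list (map (\<lambda>k. f k (vvnf b)) (vjobs b))) st)"

definition binv :: "('n, 'v, 'z) netsys_scheme \<Rightarrow> real \<Rightarrow> ('n, 'v) req list \<Rightarrow> ('n, 'v) avm \<Rightarrow> bool" where
  "binv S eps rs b \<longleftrightarrow> vjobs b \<noteq> [] \<and> vnode b \<in> nodes S \<and>
     (\<forall>k\<in>set (vjobs b). k < length rs \<and> vvnf b \<in> rvnfs (rs ! k) \<and>
        inL S eps (vrng b) (Dv S (rs ! k) (vvnf b)) \<and> layer S (vnode b) = lstar S (rs ! k))"

definition pinv :: "('n, 'v, 'z) netsys_scheme \<Rightarrow> real \<Rightarrow> ('n, 'v) req list \<Rightarrow> ('n, 'v) avm list \<Rightarrow> bool" where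
  "pinv S eps rs st \<longleftrightarrow> (\<forall>p q. p < q \<and> q < length st \<and> vnode (st ! p) = vnode (st ! q) \<and>
      vvnf (st ! p) = vvnf (st ! q) \<and> vrng (st ! p) = vrng (st ! q) \<longrightarrow>
      cj S eps (vrng (st ! p)) < theta S (vvnf (st ! p)) * (Lam rs (st ! p) + Lam rs (st ! q)))"

definition Inv :: "('n, 'v, 'z) netsys_scheme \<Rightarrow> real \<Rightarrow> ('n, 'v) req list \<Rightarrow> nat \<Rightarrow> 'v set \<Rightarrow> ('n, 'v) avm list \<Rightarrow> bool" where
  "Inv S eps rs n V st \<longleftrightarrow> (\<forall>b\<in>set st. binv S eps rs b) \<and>
     (\<forall>f. bsum f st = (\<Sum>y\<in>jobsJ rs n V. f (fst y) (snd y))) \<and> pinv S eps rs st"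

lemma sum_list_upd_real:
  assumes "p < length xs"
  shows "sum_list (xs[p := x]) = sum_list xs - xs ! p + (x::real)"
proof -
  have "sum_list xs = sum_list (take p xs @ xs ! p # drop (Suc p) xs)"
    using id_take_nth_drop[OF assms] by simp
  moreover have "xs[p := x] = take p xs @ x # drop (Suc p) xs" using upd_conv_take_nth_drop[OF assms] .
  ultimately show ?thesis by simp
qed

lemma jobsJ_fin:
  assumes vs: "valid_sys S" and us: "unlimited_seq S eps rs" and n: "n \<le> length rs" and V: "finite V"
  shows "finite (jobsJ rs n V)"
proof -
  have "{(k, v). k < n \<and> v \<in> rvnfs (rs ! k)} \<subseteq> {(k, v). k < length rs \<and> v \<in> rvnfs (rs ! k)}"
    using n by auto
  hence "finite {(k, v). k < n \<and> v \<in> rvnfs (rs ! k)}" using J_fin[OF vs us] finite_subset by blast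
  thus ?thesis unfolding jobsJ_def using V by simp
qed

lemma Lam_pos: "valid_sys S \<Longrightarrow> unlimited_seq S eps rs \<Longrightarrow> binv S eps rs b \<Longrightarrow> 0 < Lam rs b"
proof -
  assume a: "valid_sys S" "unlimited_seq S eps rs" "binv S eps rs b"
  have "\<forall>k\<in>set (vjobs b). 0 < load (rs ! k)" using a(3) load_pos[OF a(1,2)] unfolding binv_def by auto
  moreover have "vjobs b \<noteq> []" using a(3) unfolding binv_def by auto
  ultimately show ?thesis unfolding Lam_def
  proof (induction "vjobs b" arbitrary: b)
    case Nil thus ?case by simp
  next
    case (Cons a xs)
    have "0 \<le> sum_list (map (\<lambda>k. load (rs ! k)) xs)"
      using Cons(3) unfolding Cons(2)[symmetric] by (intro sum_list_nonneg) (auto intro: less_imp_le)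
    thus ?case unfolding Cons(2)[symmetric] using Cons(3) unfolding Cons(2)[symmetric] by simp
  qed
qed

lemma binv_theta: "valid_sys S \<Longrightarrow> unlimited_seq S eps rs \<Longrightarrow> binv S eps rs b \<Longrightarrow> 0 < theta S (vvnf b)"
proof -
  assume a: "valid_sys S" "unlimited_seq S eps rs" "binv S eps rs b"
  obtain k where k: "k \<in> set (vjobs b)" using a(3) unfolding binv_def by (cases "vjobs b") auto
  hence "k < length rs" "vvnf b \<in> rvnfs (rs ! k)" using a(3) unfolding binv_def by auto
  thus ?thesis using rv_sub[OF a(2)] theta_pos[OF a(1)] by auto
qed

lemma jobsJ_insert:
  assumes "v \<notin> V"
  shows "jobsJ rs n (insert v V) = insert (n, v) (jobsJ rs n V)" "(n, v) \<notin> jobsJ rs n V"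
  using assms unfolding jobsJ_def by auto

lemma place_inv:
  assumes vs: "valid_sys S" and ep: "eps > 0" and us: "unlimited_seq S eps rs"
    and n: "n < length rs" and i: "i \<in> nodes S" and li: "layer S i = lstar S (rs ! n)"
    and v: "v \<in> rvnfs (rs ! n)" and vV: "v \<notin> V" and Vs: "V \<subseteq> rvnfs (rs ! n)"
    and inv: "Inv S eps rs n V st" and pl: "place S eps rs n i v st st'"
  shows "Inv S eps rs n (insert v V) st'"
proof -
  have bi: "\<And>b. b \<in> set st \<Longrightarrow> binv S eps rs b" and bs: "\<And>f. bsum f st = (\<Sum>y\<in>jobsJ rs n V. f (fst y) (snd y))"
    and pi: "pinv S eps rs st" using inv unfolding Inv_def by auto
  have fV: "finite (VNFs S)" using vs by (simp add: valid_sys_def)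
  have finV: "finite V" by (rule finite_subset[OF subset_trans[OF Vs rv_sub[OF us n]] fV])
  have finJ: "finite (jobsJ rs n V)" using jobsJ_fin[OF vs us _ finV] n by simp
  have rhs: "(\<Sum>y\<in>jobsJ rs n (insert v V). f (fst y) (snd y)) = (\<Sum>y\<in>jobsJ rs n V. f (fst y) (snd y)) + f n v" for f :: "nat \<Rightarrow> _ \<Rightarrow> real"
  proof -
    have nin: "(n, v) \<notin> jobsJ rs n V" using vV by (rule jobsJ_insert(2))
    show ?thesis unfolding jobsJ_insert(1)[OF vV] using finJ nin by (simp add: add.commute)
  qed
  have thv: "0 < theta S v" using theta_pos[OF vs] rv_sub[OF us n] v by auto
  have lnp: "0 \<le> load (rs ! n)" using load_pos[OF vs us n] by simp
  from pl show ?thesis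
  proof cases
    case (place_old j p)
    note st' = place_old(1) and hj = place_old(2) and p = place_old(3) and via = place_old(4)
    define b where "b = st ! p"
    define b' where "b' = AVM i v j (vjobs b @ [n])"
    have grp: "vnode b = i" "vvnf b = v" "vrng b = j" using via unfolding viable_def b_def by auto
    have bin: "b \<in> set st" unfolding b_def using p by simp
    have st'b: "st' = st[p := b']" unfolding st' b'_def b_def ..
    have Lb': "Lam rs b' = Lam rs b + load (rs ! n)" unfolding b'_def Lam_def by simp
    have binv': "binv S eps rs b'"
      using bi[OF bin] grp hj i li v n unfolding binv_def b'_def by auto
    have A: "\<forall>b\<in>set st'. binv S eps rs b"
      using set_update_subset_insert[of st p b'] bi binv' unfolding st'b by blast
    have B: "bsum f st' = (\<Sum>y\<in>jobsJ rs n (insert v V). f (fst y) (snd y))" for f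
    proof -
      let ?g = "\<lambda>b. sum_list (map (\<lambda>k. f k (vvnf b)) (vjobs b))"
      have "?g b' = ?g b + f n v" unfolding b'_def using grp by simp
      moreover have "bsum f st' = bsum f st - ?g b + ?g b'"
        unfolding bsum_def st'b map_update using p by (simp add: sum_list_upd_real b_def)
      ultimately show ?thesis using bs[of f] rhs[of f] by simp
    qed
    have C: "pinv S eps rs st'"
      unfolding pinv_def
    proof (intro allI impI)
      fix p1 q1 assume h: "p1 < q1 \<and> q1 < length st' \<and> vnode (st' ! p1) = vnode (st' ! q1) \<and>
        vvnf (st' ! p1) = vvnf (st' ! q1) \<and> vrng (st' ! p1) = vrng (st' ! q1)"
      have len: "length st' = length st" unfolding st'b by simp
      have nth: "st' ! x = (if x = p then b' else st ! x)" if "x < length st" for x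
        unfolding st'b using that by simp
      have same: "vnode (st' ! x) = vnode (st ! x) \<and> vvnf (st' ! x) = vvnf (st ! x) \<and> vrng (st' ! x) = vrng (st ! x)
          \<and> Lam rs (st ! x) \<le> Lam rs (st' ! x)" if "x < length st" for x
        using nth[OF that] grp lnp Lb' unfolding b_def b'_def by auto
      have q1: "q1 < length st" "p1 < length st" using h len by auto
      have old: "cj S eps (vrng (st ! p1)) < theta S (vvnf (st ! p1)) * (Lam rs (st ! p1) + Lam rs (st ! q1))"
        using pi h same[OF q1(1)] same[OF q1(2)] q1 unfolding pinv_def by auto
      have th: "0 < theta S (vvnf (st ! p1))" using binv_theta[OF vs us bi] q1 by simp
      have "theta S (vvnf (st ! p1)) * (Lam rs (st ! p1) + Lam rs (st ! q1))
          \<le> theta S (vvnf (st ! p1)) * (Lam rs (st' ! p1) + Lam rs (st' ! q1))"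
        using same[OF q1(1)] same[OF q1(2)] th by (intro mult_left_mono) auto
      thus "cj S eps (vrng (st' ! p1)) < theta S (vvnf (st' ! p1)) * (Lam rs (st' ! p1) + Lam rs (st' ! q1))"
        using old same[OF q1(2)] by simp
    qed
    show ?thesis unfolding Inv_def using A B C by blast
  next
    case (place_new j)
    note st' = place_new(1) and hj = place_new(2) and nv = place_new(3)
    define b' where "b' = AVM i v j [n]"
    have st'b: "st' = st @ [b']" unfolding st' b'_def ..
    have Lb': "Lam rs b' = load (rs ! n)" unfolding b'_def Lam_def by simp
    have binv': "binv S eps rs b'"
      using hj i li v n unfolding binv_def b'_def by auto
    have A: "\<forall>b\<in>set st'. binv S eps rs b" using bi binv' unfolding st'b by auto
    have B: "bsum f st' = (\<Sum>y\<in>jobsJ rs n (insert v V). f (fst y) (snd y))" for f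
      using bs[of f] rhs[of f] unfolding bsum_def st'b b'_def by simp
    note f = inL_facts[OF vs ep hj]
    have C: "pinv S eps rs st'"
      unfolding pinv_def
    proof (intro allI impI)
      fix p1 q1 assume h: "p1 < q1 \<and> q1 < length st' \<and> vnode (st' ! p1) = vnode (st' ! q1) \<and>
        vvnf (st' ! p1) = vvnf (st' ! q1) \<and> vrng (st' ! p1) = vrng (st' ! q1)"
      have p1: "p1 < length st" "st' ! p1 = st ! p1" using h unfolding st'b by (auto simp: nth_append)
      show "cj S eps (vrng (st' ! p1)) < theta S (vvnf (st' ! p1)) * (Lam rs (st' ! p1) + Lam rs (st' ! q1))"
      proof (cases "q1 < length st")
        case True
        thus ?thesis using pi h p1 unfolding pinv_def st'b by (auto simp: nth_append)
      next
        case False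
        hence q: "q1 = length st" using h unfolding st'b by simp
        hence sq: "st' ! q1 = b'" unfolding st'b by simp
        define b where "b = st ! p1"
        have grp: "vnode b = i" "vvnf b = v" "vrng b = j" using h p1 sq unfolding b_def b'_def by auto
        have bin: "binv S eps rs b" using bi p1 unfolding b_def by simp
        show ?thesis
        proof (rule ccontr)
          assume "\<not> ?thesis"
          hence le: "theta S v * (Lam rs b + load (rs ! n)) \<le> cj S eps j"
            using p1 sq grp Lb' unfolding b_def by simp
          define x where "x = mubar S - theta S v * (Lam rs b + load (rs ! n))"
          have xge: "mubar S - cj S eps j \<le> x" unfolding x_def using le by linarith
          have mpos: "0 < mubar S - cj S eps j" using f(3) by simp
          have x0: "0 < x" using xge mpos by linarith
          have ix: "1 / x \<le> 1 / (mubar S - cj S eps j)"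
            using xge mpos by (intro divide_left_mono) auto
          have "1 / x \<le> Dv S (rs ! n) v" using ix f(4) by linarith
          moreover have "1 / x \<le> Dv S (rs ! k') v" if "k' \<in> set (vjobs b)" for k'
          proof -
            have "inL S eps j (Dv S (rs ! k') v)" using bin that grp unfolding binv_def by auto
            thus ?thesis using ix inL_facts(4)[OF vs ep] by fastforce
          qed
          ultimately have "viable S rs n v i j b"
            unfolding viable_def Let_def using grp x0 unfolding x_def by auto
          thus False using nv p1 unfolding b_def by auto
        qed
      qed
    qed
    show ?thesis unfolding Inv_def using A B C by blast
  qed
qed

lemma place_list_inv:
  assumes vs: "valid_sys S" and ep: "eps > 0" and us: "unlimited_seq S eps rs"
    and n: "n < length rs" and i: "i \<in> nodes S" and li: "layer S i = lstar S (rs ! n)"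
  shows "place_list S eps rs n i xs st st' \<Longrightarrow> Inv S eps rs n V st \<Longrightarrow> distinct xs \<Longrightarrow>
    set xs \<inter> V = {} \<Longrightarrow> V \<union> set xs \<subseteq> rvnfs (rs ! n) \<Longrightarrow> Inv S eps rs n (V \<union> set xs) st'"
proof (induction xs st st' arbitrary: V rule: place_list.induct)
  case (1 st)
  then show ?case by simp
next
  case (2 v st st1 xs st2)
  have "Inv S eps rs n (insert v V) st1"
    using place_inv[OF vs ep us n i li _ _ _ 2(4) 2(1)] 2(5-7) by auto
  hence "Inv S eps rs n (insert v V \<union> set xs) st2"
    using 2(3)[of "insert v V"] 2(5-7) by auto
  thus ?case by simp
qed

lemma alg_inv:
  assumes vs: "valid_sys S" and ep: "eps > 0" and us: "unlimited_seq S eps rs"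
  shows "alg_run S eps rs n st \<Longrightarrow> n \<le> length rs \<and> Inv S eps rs n {} st"
proof (induction n st rule: alg_run.induct)
  case 1
  have "jobsJ rs 0 {} = {}" unfolding jobsJ_def by auto
  thus ?case unfolding Inv_def bsum_def pinv_def by simp
next
  case (2 n st i xs st')
  have h: "n < length rs" "i \<in> nodes S" "layer S i = lstar S (rs ! n)" "distinct xs"
    "set xs = rvnfs (rs ! n)" "place_list S eps rs n i xs st st'" "Inv S eps rs n {} st"
    using 2 by auto
  have "Inv S eps rs n ({} \<union> set xs) st'"
    using place_list_inv[OF vs ep us h(1,2,3) h(6) h(7) h(4)] h(5) by auto
  moreover have "jobsJ rs n ({} \<union> set xs) = jobsJ rs (Suc n) {}"
    using h(5) unfolding jobsJ_def by (auto simp: less_Suc_eq)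
  ultimately show ?case using h(1) unfolding Inv_def by simp
qed



definition psi :: "('n, 'v, 'z) netsys_scheme \<Rightarrow> real \<Rightarrow> ('n, 'v) req \<Rightarrow> 'v \<Rightarrow> real" where
  "psi S eps r v = 2 * (theta S v * load r) / cj S eps (jx S eps (Dv S r v)) *
     (kf S (lstar S r) + kp S (lstar S r) * (mubar S - cj S eps (jx S eps (Dv S r v))))
     + kp S (lstar S r) * (theta S v * load r)"

definition Gset :: "('n, 'v, 'z) netsys_scheme \<Rightarrow> real \<Rightarrow> ('n \<times> 'v \<times> nat) set" where
  "Gset S eps = nodes S \<times> VNFs S \<times> {j. lmin S * (1 + eps) ^ (j + 1) < mubar S}"

definition Emax :: "('n, 'v, 'z) netsys_scheme \<Rightarrow> real" where
  "Emax S = (\<Sum>i\<in>nodes S. kf S (layer S i) + kp S (layer S i) * mubar S)"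

definition Kc :: "('n, 'v, 'z) netsys_scheme \<Rightarrow> real \<Rightarrow> real" where
  "Kc S eps = real (card (Gset S eps)) * Emax S"

lemma fin_Gset:
  assumes vs: "valid_sys S" and ep: "eps > 0"
  shows "finite (Gset S eps)"
proof -
  have lm: "0 < lmin S" using lmin_pos[OF vs] .
  define M where "M = mubar S / (lmin S * eps)"
  have "{j. lmin S * (1 + eps) ^ (j + 1) < mubar S} \<subseteq> {..nat \<lceil>M\<rceil>}"
  proof
    fix j assume "j \<in> {j. lmin S * (1 + eps) ^ (j + 1) < mubar S}"
    hence h: "lmin S * (1 + eps) ^ (j + 1) < mubar S" by simp
    have "1 + real (j + 1) * eps \<le> (1 + eps) ^ (j + 1)"
      using Bernoulli_inequality[of eps "j + 1"] ep by simp
    hence "lmin S * (1 + real (j + 1) * eps) \<le> lmin S * (1 + eps) ^ (j + 1)"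
      using lm by (intro mult_left_mono) auto
    moreover have "lmin S * (1 + real (j + 1) * eps) = lmin S * (real j * eps) + lmin S * (1 + eps)"
      by (simp add: algebra_simps)
    moreover have "0 < lmin S * (1 + eps)" using lm ep by simp
    ultimately have "lmin S * (real j * eps) < mubar S" using h by linarith
    hence "real j < M" unfolding M_def using lm ep by (simp add: field_simps)
    hence "real j < real (nat \<lceil>M\<rceil>)" using of_nat_ceiling[of M] by linarith
    thus "j \<in> {..nat \<lceil>M\<rceil>}" by simp
  qed
  hence "finite {j. lmin S * (1 + eps) ^ (j + 1) < mubar S}" using finite_subset by blast
  moreover have "finite (nodes S)" "finite (VNFs S)" using vs by (simp_all add: valid_sys_def)
  ultimately show ?thesis unfolding Gset_def by simp
qed

lemma alg_id:
  fixes c e t F P m :: real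
  assumes "0 < c" "0 < e"
  shows "2 * (1 + e) * (t / (c * (1 + e)) * (F + P * (m - c * (1 + e))) + P * t)
     = 2 * t / c * (F + P * (m - c)) + P * t + P * t"
proof -
  have "0 < c * e" using assms by simp
  hence ne: "c \<noteq> 0" "1 + e \<noteq> 0" "c + c * e \<noteq> 0" using assms by linarith+
  have "2 * (1 + e) * (t / (c * (1 + e)) * (F + P * (m - c * (1 + e)))) = 2 * t / c * (F + P * (m - c * (1 + e)))"
    using ne by (simp add: field_simps)
  also have "\<dots> = 2 * t / c * (F + P * (m - c)) - 2 * t * P * e"
    using assms by (simp add: field_simps)
  finally show ?thesis by (simp add: algebra_simps)
qed

lemma psi_phi:
  assumes vs: "valid_sys S" and ep: "eps > 0" and vr: "valid_req S eps r" and v: "v \<in> rvnfs r"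
  shows "psi S eps r v \<le> 2 * (1 + eps) * phi S eps r v"
proof -
  define c where "c = cj S eps (jx S eps (Dv S r v))"
  have c0: "0 < c" unfolding c_def using inL_facts(1)[OF vs ep jx_inL[OF vs ep vr v]] .
  have L: "0 < kp S (lstar S r)" using kfp_pos[OF vs lstar_props(1)[OF vs vr]] by simp
  have th: "0 < theta S v" using theta_pos[OF vs] v vr unfolding valid_req_def by auto
  have ld: "0 < load r" using vr lmin_pos[OF vs] unfolding valid_req_def by auto
  have "2 * (1 + eps) * phi S eps r v = psi S eps r v + kp S (lstar S r) * (theta S v * load r)"
    unfolding phi_def psi_def c_def[symmetric] by (rule alg_id[OF c0 ep])
  moreover have "0 \<le> kp S (lstar S r) * (theta S v * load r)" using L th ld by simp
  ultimately show ?thesis by linarith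
qed

lemma bin_bound:
  assumes vs: "valid_sys S" and ep: "eps > 0" and us: "unlimited_seq S eps rs"
    and bin: "binv S eps rs b"
  shows "(if vjobs b = [] then 0 else kf S (layer S (vnode b)) + kp S (layer S (vnode b)) * acap S rs b)
    \<le> (if 2 * theta S (vvnf b) * Lam rs b \<le> cj S eps (vrng b)
        then kf S (layer S (vnode b)) + kp S (layer S (vnode b)) * (mubar S - cj S eps (vrng b)) else 0)
       + sum_list (map (\<lambda>k. psi S eps (rs ! k) (vvnf b)) (vjobs b))"
proof -
  define l where "l = layer S (vnode b)"
  define j where "j = vrng b"
  define v where "v = vvnf b"
  define th where "th = theta S v"
  define Lm where "Lm = Lam rs b"
  define c where "c = cj S eps j"
  define E where "E = kf S l + kp S l * (mubar S - c)"
  have ne: "vjobs b \<noteq> []" and nd: "vnode b \<in> nodes S"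
    and jb: "\<And>k. k \<in> set (vjobs b) \<Longrightarrow> k < length rs \<and> v \<in> rvnfs (rs ! k) \<and>
        inL S eps j (Dv S (rs ! k) v) \<and> l = lstar S (rs ! k)"
    using bin unfolding binv_def l_def j_def v_def by auto
  obtain k0 where k0: "k0 \<in> set (vjobs b)" using ne by (cases "vjobs b") auto
  note f = inL_facts[OF vs ep conjunct1[OF conjunct2[OF conjunct2[OF jb[OF k0]]]], folded c_def]
  have lp: "0 < kf S l" "0 < kp S l" using kfp_pos[OF vs] nd unfolding l_def by auto
  have thp: "0 < th" unfolding th_def v_def using binv_theta[OF vs us bin] .
  have Lmp: "0 < Lm" unfolding Lm_def using Lam_pos[OF vs us bin] .
  have Ep: "0 < E" unfolding E_def using lp f(3) by (simp add: add_pos_pos)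
  define Dset where "Dset = (\<lambda>k. Dv S (rs ! k) v) ` set (vjobs b)"
  have "Min Dset \<in> Dset" unfolding Dset_def using ne by (intro Min_in) auto
  then obtain k1 where k1: "k1 \<in> set (vjobs b)" "Min Dset = Dv S (rs ! k1) v" unfolding Dset_def by auto
  note f1 = inL_facts[OF vs ep conjunct1[OF conjunct2[OF conjunct2[OF jb[OF k1(1)]]]], folded c_def]
  have mp: "0 < Min Dset" using f1(6) k1(2) by simp
  have "1 / Min Dset \<le> 1 / (1 / (mubar S - c))"
    using f1(4) k1(2) mp f1(3) by (intro divide_left_mono) auto
  hence im: "1 / Min Dset \<le> mubar S - c" by simp
  have acap: "acap S rs b = th * Lm + 1 / Min Dset"
    unfolding acap_def th_def Lm_def Dset_def v_def ..
  have cost: "kf S l + kp S l * acap S rs b \<le> E + kp S l * th * Lm"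
  proof -
    have a: "kp S l * (1 / Min Dset) \<le> kp S l * (mubar S - c)" using mult_left_mono[OF im] lp(2) by simp
    have "kf S l + kp S l * acap S rs b = kf S l + kp S l * (1 / Min Dset) + kp S l * th * Lm"
      unfolding acap by (simp add: algebra_simps)
    thus ?thesis using a unfolding E_def by linarith
  qed
  have hs: "sum_list (map (\<lambda>k. psi S eps (rs ! k) v) (vjobs b)) = (2 * th / c * E + kp S l * th) * Lm"
  proof -
    have "map (\<lambda>k. psi S eps (rs ! k) v) (vjobs b) = map (\<lambda>k. (2 * th / c * E + kp S l * th) * load (rs ! k)) (vjobs b)"
    proof (rule map_cong[OF refl])
      fix k assume k: "k \<in> set (vjobs b)"
      have jk: "jx S eps (Dv S (rs ! k) v) = j" using jx_eq[OF vs ep] jb[OF k] by blast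
      have lk: "lstar S (rs ! k) = l" using jb[OF k] by simp
      show "psi S eps (rs ! k) v = (2 * th / c * E + kp S l * th) * load (rs ! k)"
        unfolding psi_def jk lk c_def[symmetric] E_def th_def using f(1) by (simp add: field_simps)
    qed
    hence "sum_list (map (\<lambda>k. psi S eps (rs ! k) v) (vjobs b))
        = sum_list (map (\<lambda>k. (2 * th / c * E + kp S l * th) * load (rs ! k)) (vjobs b))" by (rule arg_cong)
    also have "\<dots> = (2 * th / c * E + kp S l * th) * Lm" unfolding Lm_def Lam_def by (rule sum_list_const_mult)
    finally show ?thesis .
  qed
  show ?thesis
  proof (cases "2 * th * Lm \<le> c")
    case True
    have "0 \<le> 2 * th / c * E * Lm" using thp f(1) Ep Lmp by simp
    thus ?thesis using cost hs True ne unfolding l_def[symmetric] j_def[symmetric] v_def[symmetric]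
        th_def[symmetric] Lm_def[symmetric] c_def[symmetric] E_def[symmetric] by (simp add: algebra_simps)
  next
    case False
    have "1 \<le> 2 * th * Lm / c" using False f(1) by simp
    hence "1 * E \<le> 2 * th * Lm / c * E" using Ep by (intro mult_right_mono) auto
    hence "E \<le> 2 * th * Lm / c * E" by simp
    hence "E + kp S l * th * Lm \<le> (2 * th / c * E + kp S l * th) * Lm" by (simp add: algebra_simps)
    thus ?thesis using cost hs False ne unfolding l_def[symmetric] j_def[symmetric] v_def[symmetric]
        th_def[symmetric] Lm_def[symmetric] c_def[symmetric] E_def[symmetric] by simp
  qed
qed

lemma Emax_ge:
  assumes vs: "valid_sys S" and i: "i \<in> nodes S" and c: "0 < c"
  shows "kf S (layer S i) + kp S (layer S i) * (mubar S - c) \<le> Emax S" "0 \<le> Emax S"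
proof -
  have pos: "0 < kf S (layer S i') + kp S (layer S i') * mubar S" if "i' \<in> nodes S" for i'
    using kfp_pos[OF vs, of "layer S i'"] that vs by (simp add: valid_sys_def add_pos_pos)
  have fin: "finite (nodes S)" using vs by (simp add: valid_sys_def)
  have "kf S (layer S i) + kp S (layer S i) * (mubar S - c) \<le> kf S (layer S i) + kp S (layer S i) * mubar S"
    using kfp_pos[OF vs, of "layer S i"] i c by (simp add: algebra_simps)
  also have "\<dots> \<le> Emax S" unfolding Emax_def
    by (rule member_le_sum[OF i _ fin]) (use pos in \<open>auto intro: less_imp_le\<close>)
  finally show "kf S (layer S i) + kp S (layer S i) * (mubar S - c) \<le> Emax S" .
  show "0 \<le> Emax S" unfolding Emax_def using pos by (intro sum_nonneg) (auto intro: less_imp_le)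
qed

lemma alg_upper:
  fixes S :: "('n, 'v, 'z) netsys_scheme" and st :: "('n, 'v) avm list"
  assumes vs: "valid_sys S" and ep: "eps > 0" and us: "unlimited_seq S eps rs"
    and inv: "Inv S eps rs (length rs) {} st"
  shows "alg_cost S rs st \<le> (\<Sum>y\<in>{(k, v). k < length rs \<and> v \<in> rvnfs (rs ! k)}. psi S eps (rs ! fst y) (snd y)) + Kc S eps"
proof -
  have bi: "\<And>b. b \<in> set st \<Longrightarrow> binv S eps rs b" and bs: "\<And>f. bsum f st = (\<Sum>y\<in>jobsJ rs (length rs) {}. f (fst y) (snd y))"
    and pi: "pinv S eps rs st" using inv unfolding Inv_def by auto
  define small where "small b \<longleftrightarrow> 2 * theta S (vvnf b) * Lam rs b \<le> cj S eps (vrng b)" for b :: "('n, 'v) avm"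
  define E where "E b = kf S (layer S (vnode b)) + kp S (layer S (vnode b)) * (mubar S - cj S eps (vrng b))" for b :: "('n, 'v) avm"
  define sm where "sm b = (if small b then E b else 0)" for b :: "('n, 'v) avm"
  define hb where "hb b = sum_list (map (\<lambda>k. psi S eps (rs ! k) (vvnf b)) (vjobs b))" for b :: "('n, 'v) avm"
  have "alg_cost S rs st \<le> sum_list (map (\<lambda>b. sm b + hb b) st)"
    unfolding alg_cost_def
    by (rule sum_list_mono) (unfold sm_def hb_def small_def E_def, rule bin_bound[OF vs ep us bi])
  also have "\<dots> = sum_list (map sm st) + bsum (\<lambda>k v. psi S eps (rs ! k) v) st"
    unfolding bsum_def hb_def by (rule sum_list_addf)
  also have "bsum (\<lambda>k v. psi S eps (rs ! k) v) st = (\<Sum>y\<in>{(k, v). k < length rs \<and> v \<in> rvnfs (rs ! k)}. psi S eps (rs ! fst y) (snd y))"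
  proof -
    have "jobsJ rs (length rs) {} = {(k, v). k < length rs \<and> v \<in> rvnfs (rs ! k)}" unfolding jobsJ_def by simp
    thus ?thesis using bs by simp
  qed
  also have "sum_list (map sm st) \<le> Kc S eps"
  proof -
    define Ssm where "Ssm = {p \<in> {0..<length st}. small (st ! p)}"
    have "sum_list (map sm st) = (\<Sum>p = 0..<length st. sm (st ! p))"
      by (simp add: sum_list_sum_nth)
    also have "\<dots> = (\<Sum>p\<in>Ssm. E (st ! p))"
      unfolding Ssm_def sm_def by (rule sum.inter_filter[symmetric]) simp
    also have "\<dots> \<le> real (card Ssm) * Emax S"
    proof (rule sum_bounded_above)
      fix p assume "p \<in> Ssm"
      hence p: "st ! p \<in> set st" unfolding Ssm_def by auto
      have b: "binv S eps rs (st ! p)" using bi[OF p] .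
      obtain k where k: "k \<in> set (vjobs (st ! p))" using b unfolding binv_def by (cases "vjobs (st ! p)") auto
      have "inL S eps (vrng (st ! p)) (Dv S (rs ! k) (vvnf (st ! p)))" using b k unfolding binv_def by auto
      hence c: "0 < cj S eps (vrng (st ! p))" using inL_facts(1)[OF vs ep] by blast
      show "E (st ! p) \<le> Emax S" unfolding E_def using Emax_ge(1)[OF vs _ c] b unfolding binv_def by auto
    qed
    also have "\<dots> \<le> real (card (Gset S eps)) * Emax S"
    proof (rule mult_right_mono)
      show "0 \<le> Emax S"
      proof (cases "nodes S = {}")
        case True thus ?thesis unfolding Emax_def by simp
      next
        case False
        then obtain i where "i \<in> nodes S" by blast
        thus ?thesis using Emax_ge(2)[OF vs _ zero_less_one] by blast
      qed
      define g where "g p = (vnode (st ! p), vvnf (st ! p), vrng (st ! p))" for p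
      have "inj_on g Ssm"
      proof (rule inj_onI)
        fix p q assume p: "p \<in> Ssm" and q: "q \<in> Ssm" and gq: "g p = g q"
        show "p = q"
        proof (rule ccontr)
          assume "p \<noteq> q"
          have contra: False if a: "a \<in> Ssm" "b \<in> Ssm" "g a = g b" "a < b" for a b
          proof -
            have "cj S eps (vrng (st ! a)) < theta S (vvnf (st ! a)) * (Lam rs (st ! a) + Lam rs (st ! b))"
              using pi a unfolding pinv_def g_def Ssm_def by auto
            moreover have "2 * theta S (vvnf (st ! a)) * Lam rs (st ! a) \<le> cj S eps (vrng (st ! a))"
              "2 * theta S (vvnf (st ! b)) * Lam rs (st ! b) \<le> cj S eps (vrng (st ! b))"
              using a unfolding Ssm_def small_def by auto
            moreover have "vvnf (st ! a) = vvnf (st ! b)" "vrng (st ! a) = vrng (st ! b)" using a(3) unfolding g_def by auto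
            ultimately show False by (simp add: algebra_simps)
          qed
          show False using \<open>p \<noteq> q\<close> contra[OF p q gq] contra[OF q p gq[symmetric]] by linarith
        qed
      qed
      moreover have "g ` Ssm \<subseteq> Gset S eps"
      proof
        fix z assume "z \<in> g ` Ssm"
        then obtain p where p: "p \<in> Ssm" "z = g p" by auto
        hence pin: "st ! p \<in> set st" unfolding Ssm_def by auto
        have b: "binv S eps rs (st ! p)" using bi[OF pin] .
        obtain k where k: "k \<in> set (vjobs (st ! p))" using b unfolding binv_def by (cases "vjobs (st ! p)") auto
        have kk: "k < length rs" "vvnf (st ! p) \<in> rvnfs (rs ! k)" "inL S eps (vrng (st ! p)) (Dv S (rs ! k) (vvnf (st ! p)))"
          using b k unfolding binv_def by auto
        have "vvnf (st ! p) \<in> VNFs S" using rv_sub[OF us kk(1)] kk(2) by auto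
        moreover have "lmin S * (1 + eps) ^ (vrng (st ! p) + 1) < mubar S" using kk(3) unfolding inL_def by simp
        moreover have "vnode (st ! p) \<in> nodes S" using b unfolding binv_def by simp
        ultimately show "z \<in> Gset S eps" unfolding Gset_def p(2) g_def by simp
      qed
      ultimately have "card Ssm \<le> card (Gset S eps)" using card_inj_on_le fin_Gset[OF vs ep] by blast
      thus "real (card Ssm) \<le> real (card (Gset S eps))" by simp
    qed
    finally show ?thesis unfolding Kc_def .
  qed
  finally show ?thesis by simp
qed



theorem theorem1:
  fixes S :: "('n, 'v) netsys" and eps :: real
  assumes "valid_sys S" and "eps > 0"
  shows "asymp_competitive (2 * (1 + eps)) (unlimited_seq S eps)
           (\<lambda>rs a. \<exists>st. alg_run S eps rs (length rs) st \<and> a = alg_cost S rs st)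
           (opt_cost S)"
  unfolding asymp_competitive_def
proof (intro allI impI)
  fix \<delta> :: real assume dp: "0 < \<delta>"
  note vs = assms(1) and ep = assms(2)
  define X where "X = max (Kc S eps / \<delta>) (Inf ({} :: real set) + 1)"
  show "\<exists>X. \<forall>\<sigma> a. unlimited_seq S eps \<sigma> \<longrightarrow>
              (\<exists>st. alg_run S eps \<sigma> (length \<sigma>) st \<and> a = alg_cost S \<sigma> st) \<longrightarrow>
              X \<le> opt_cost S \<sigma> \<longrightarrow> a \<le> (2 * (1 + eps) + \<delta>) * opt_cost S \<sigma>"
  proof (intro exI[of _ X] allI impI)
    fix rs a
    assume us: "unlimited_seq S eps rs"
      and run: "\<exists>st. alg_run S eps rs (length rs) st \<and> a = alg_cost S rs st"
      and Xo: "X \<le> opt_cost S rs"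
    obtain st where st: "alg_run S eps rs (length rs) st" "a = alg_cost S rs st" using run by blast
    define J where "J = {(k, v). k < length rs \<and> v \<in> rvnfs (rs ! k)}"
    define Fs where "Fs = {dep_cost S rs vms asg | vms asg. feasible_dep S rs vms asg}"
    have oc: "opt_cost S rs = Inf Fs" unfolding opt_cost_def Fs_def ..
    have Fne: "Fs \<noteq> {}"
    proof
      assume "Fs = {}"
      hence "opt_cost S rs = Inf ({} :: real set)" using oc by simp
      moreover have "Inf ({} :: real set) + 1 \<le> X" unfolding X_def by simp
      ultimately show False using Xo by simp
    qed
    have phi_le: "(\<Sum>y\<in>J. phi S eps (rs ! fst y) (snd y)) \<le> opt_cost S rs"
      unfolding oc
    proof (rule cInf_greatest[OF Fne])
      fix z assume "z \<in> Fs"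
      then obtain vms asg where "z = dep_cost S rs vms asg" "feasible_dep S rs vms asg" unfolding Fs_def by blast
      thus "(\<Sum>y\<in>J. phi S eps (rs ! fst y) (snd y)) \<le> z" unfolding J_def using opt_lower[OF vs ep us] by simp
    qed
    have inv: "Inv S eps rs (length rs) {} st" using alg_inv[OF vs ep us st(1)] by simp
    have "a \<le> (\<Sum>y\<in>J. psi S eps (rs ! fst y) (snd y)) + Kc S eps"
      unfolding st(2) J_def by (rule alg_upper[OF vs ep us inv])
    also have "(\<Sum>y\<in>J. psi S eps (rs ! fst y) (snd y)) \<le> (\<Sum>y\<in>J. 2 * (1 + eps) * phi S eps (rs ! fst y) (snd y))"
    proof (rule sum_mono)
      fix y assume "y \<in> J"
      hence y: "fst y < length rs" "snd y \<in> rvnfs (rs ! fst y)" unfolding J_def by auto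
      show "psi S eps (rs ! fst y) (snd y) \<le> 2 * (1 + eps) * phi S eps (rs ! fst y) (snd y)"
        by (rule psi_phi[OF vs ep valid_nth[OF us y(1)] y(2)])
    qed
    also have "(\<Sum>y\<in>J. 2 * (1 + eps) * phi S eps (rs ! fst y) (snd y)) \<le> 2 * (1 + eps) * opt_cost S rs"
      unfolding sum_distrib_left[symmetric] using phi_le ep by (intro mult_left_mono) auto
    also have "Kc S eps \<le> \<delta> * opt_cost S rs"
    proof -
      have "Kc S eps / \<delta> \<le> opt_cost S rs" using Xo unfolding X_def by simp
      thus ?thesis using dp by (simp add: pos_divide_le_eq mult.commute)
    qed
    finally show "a \<le> (2 * (1 + eps) + \<delta>) * opt_cost S rs" by (simp add: algebra_simps)
  qed
qed

end
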